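(* Consider the randomized matching algorithm on the helper graph $\mathcal{H}_i$ described in the context, executed in the V-CONGEST model on $G$ where each real node $x$ simulates all copies $x_{\mathcal{C}}$ in $\mathcal{H}_i$ of its type-1 and type-2 virtual nodes on layer $l$. In each round of this matching algorithm, each real edge of $G$ is used to transmit at most twice in each direction; consequently each round of the matching algorithm can be carried out in $O(\Delta)$ time slots.
   Context: $G=(V,E)$ is a finite undirected graph with maximum degree $\Delta$. Fix an integer $L$. The virtual graph $\mathcal{G}$ contains $3L$ copies of each $v\in V$: each lower layer $1,\dots,L$ contains one copy of every node; each upper layer $L+1,\dots,2L$ contains a type-1 copy and a type-2 copy of every node. Every copy of $v$ is adjacent to all other copies of $v$ and to all copies of each neighbor of $v$ in $G$. $\Psi$ maps virtual nodes to real nodes. There are classes $1,\dots,t$. For a fixed upper layer $l$, nodes of layers $1,\dots,l-1$ are old nodes, each assigned a class; a component of class $i$ is a connected component of the subgraph induced by old nodes of class $i$. The helper graph $\mathcal{H}_i[\mathcal{C}]$: for each type-2 node $v$ of layer $l$, a node $v_{\mathcal{C}}$ is added iff $\Psi(v)\notin\Psi(\mathcal{C})$, $v$ has a neighbor in $\mathcal{C}$, and $v$ has no neighbor in another component of class $i$; for each such $v_{\mathcal{C}}$ and each type-1 neighbor $w$ of $v$ on layer $l$ that has a neighbor in some component $\mathcal{C}'\neq\mathcal{C}$ of class $i$ but no neighbor in $\mathcal{C}$, a node $w_{\mathcal{C}}$ and the edge $\{v_{\mathcal{C}},w_{\mathcal{C}}\}$ are added. $\mathcal{H}_i$ is the disjoint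 union of the $\mathcal{H}_i[\mathcal{C}]$; its nodes $v_{\mathcal{C}}$ coming from type-2 nodes are called type-2 and those coming from type-1 nodes type-1, and every edge joins a type-2 and a type-1 node. Matching algorithm: a node of $\mathcal{H}_i$ is active iff none of its incident edges is matched, an edge is active iff both endpoints are active. In each round, every active type-2 node assigns random numbers from a sufficiently large range to its incident active edges, selects the edge with the largest number and sends this choice to its neighbors; every type-1 node that received at least one proposal picks the proposed edge with the largest number and adds it to the matching (informing the proposer); matched nodes and their edges become inactive. V-CONGEST model: in each time slot each real node may send one identical message of $O(\log n)$ bits to all its neighbors in $G$. *)

theory Defs
  imports Main
begin

datatype 'a vnode = Low nat 'a | T1 nat 'a | T2 nat 'a

fun psi :: "'a vnode \<Rightarrow> 'a" where
  "psi (Low j x) = x" | "psi (T1 j x) = x" | "psi (T2 j x) = x"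

fun layer :: "'a vnode \<Rightarrow> nat" where
  "layer (Low j x) = j" | "layer (T1 j x) = j" | "layer (T2 j x) = j"

definition vnodes :: "'a set \<Rightarrow> nat \<Rightarrow> 'a vnode set" where
  "vnodes V L =
     {Low j x | j x. x \<in> V \<and> 1 \<le> j \<and> j \<le> L}
   \<union> {T1 j x | j x. x \<in> V \<and> L < j \<and> j \<le> 2 * L}
   \<union> {T2 j x | j x. x \<in> V \<and> L < j \<and> j \<le> 2 * L}"

definition vadj :: "'a set \<Rightarrow> ('a \<Rightarrow> 'a \<Rightarrow> bool) \<Rightarrow> nat \<Rightarrow> 'a vnode \<Rightarrow> 'a vnode \<Rightarrow> bool" where
  "vadj V E L u w \<longleftrightarrow> u \<in> vnodes V L \<and> w \<in> vnodes V L \<and> u \<noteq> w \<and>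
     (psi u = psi w \<or> E (psi u) (psi w))"

definition old :: "'a set \<Rightarrow> nat \<Rightarrow> nat \<Rightarrow> 'a vnode \<Rightarrow> bool" where
  "old V L l u \<longleftrightarrow> u \<in> vnodes V L \<and> layer u < l"

definition cedges :: "'a set \<Rightarrow> ('a \<Rightarrow> 'a \<Rightarrow> bool) \<Rightarrow> nat \<Rightarrow> nat \<Rightarrow> ('a vnode \<Rightarrow> nat) \<Rightarrow> nat
    \<Rightarrow> ('a vnode \<times> 'a vnode) set" where
  "cedges V E L l cls i = {(u, w). vadj V E L u w \<and> old V L l u \<and> old V L l w \<and>
                                   cls u = i \<and> cls w = i}"

definition comps :: "'a set \<Rightarrow> ('a \<Rightarrow> 'a \<Rightarrow> bool) \<Rightarrow> nat \<Rightarrow> nat \<Rightarrow> ('a vnode \<Rightarrow> nat) \<Rightarrow> nat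
    \<Rightarrow> 'a vnode set set" where
  "comps V E L l cls i =
     {{w. (u, w) \<in> (cedges V E L l cls i)\<^sup>*} | u. old V L l u \<and> cls u = i}"

definition has_nbr_in :: "'a set \<Rightarrow> ('a \<Rightarrow> 'a \<Rightarrow> bool) \<Rightarrow> nat \<Rightarrow> 'a vnode \<Rightarrow> 'a vnode set \<Rightarrow> bool" where
  "has_nbr_in V E L u C \<longleftrightarrow> (\<exists>w\<in>C. vadj V E L u w)"

text \<open>Nodes of the helper graph H_i are pairs (v, C) standing for v_C.\<close>
type_synonym 'a hnode = "'a vnode \<times> 'a vnode set"

definition hnode2 :: "'a set \<Rightarrow> ('a \<Rightarrow> 'a \<Rightarrow> bool) \<Rightarrow> nat \<Rightarrow> nat \<Rightarrow> ('a vnode \<Rightarrow> nat) \<Rightarrow> nat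
    \<Rightarrow> 'a hnode \<Rightarrow> bool" where
  "hnode2 V E L l cls i p \<longleftrightarrow>
     (case p of (v, C) \<Rightarrow>
        C \<in> comps V E L l cls i \<and> (\<exists>x\<in>V. v = T2 l x) \<and> psi v \<notin> psi ` C \<and>
        has_nbr_in V E L v C \<and>
        (\<forall>C'\<in>comps V E L l cls i. C' \<noteq> C \<longrightarrow> \<not> has_nbr_in V E L v C'))"

text \<open>Edges {v_C, w_C} of H_i, oriented as (type-2 endpoint, type-1 endpoint).\<close>
definition hedge :: "'a set \<Rightarrow> ('a \<Rightarrow> 'a \<Rightarrow> bool) \<Rightarrow> nat \<Rightarrow> nat \<Rightarrow> ('a vnode \<Rightarrow> nat) \<Rightarrow> nat
    \<Rightarrow> 'a hnode \<times> 'a hnode \<Rightarrow> bool" where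
  "hedge V E L l cls i e \<longleftrightarrow>
     (case e of ((v, C), (w, C')) \<Rightarrow>
        C' = C \<and> hnode2 V E L l cls i (v, C) \<and> (\<exists>y. w = T1 l y) \<and> vadj V E L v w \<and>
        (\<exists>C''\<in>comps V E L l cls i. C'' \<noteq> C \<and> has_nbr_in V E L w C'') \<and>
        \<not> has_nbr_in V E L w C)"

definition chosen :: "('b \<Rightarrow> bool) \<Rightarrow> ('b \<Rightarrow> nat) \<Rightarrow> 'b" where
  "chosen S r = (SOME e. S e \<and> (\<forall>e'. S e' \<longrightarrow> r e' \<le> r e))"

definition hactive :: "('n \<times> 'n) set \<Rightarrow> 'n \<Rightarrow> bool" where
  "hactive M p \<longleftrightarrow> \<not> (\<exists>e\<in>M. fst e = p \<or> snd e = p)"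

definition active_edge :: "'a set \<Rightarrow> ('a \<Rightarrow> 'a \<Rightarrow> bool) \<Rightarrow> nat \<Rightarrow> nat \<Rightarrow> ('a vnode \<Rightarrow> nat) \<Rightarrow> nat
    \<Rightarrow> ('a hnode \<times> 'a hnode) set \<Rightarrow> 'a hnode \<times> 'a hnode \<Rightarrow> bool" where
  "active_edge V E L l cls i M e \<longleftrightarrow>
     hedge V E L l cls i e \<and> hactive M (fst e) \<and> hactive M (snd e)"

definition proposing :: "'a set \<Rightarrow> ('a \<Rightarrow> 'a \<Rightarrow> bool) \<Rightarrow> nat \<Rightarrow> nat \<Rightarrow> ('a vnode \<Rightarrow> nat) \<Rightarrow> nat
    \<Rightarrow> ('a hnode \<times> 'a hnode) set \<Rightarrow> 'a hnode \<Rightarrow> bool" where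
  "proposing V E L l cls i M p \<longleftrightarrow>
     hnode2 V E L l cls i p \<and> hactive M p \<and> (\<exists>e. active_edge V E L l cls i M e \<and> fst e = p)"

definition proposal :: "'a set \<Rightarrow> ('a \<Rightarrow> 'a \<Rightarrow> bool) \<Rightarrow> nat \<Rightarrow> nat \<Rightarrow> ('a vnode \<Rightarrow> nat) \<Rightarrow> nat
    \<Rightarrow> ('a hnode \<times> 'a hnode) set \<Rightarrow> ('a hnode \<times> 'a hnode \<Rightarrow> nat) \<Rightarrow> 'a hnode \<Rightarrow> 'a hnode \<times> 'a hnode" where
  "proposal V E L l cls i M r p = chosen (\<lambda>e. active_edge V E L l cls i M e \<and> fst e = p) r"

definition received :: "'a set \<Rightarrow> ('a \<Rightarrow> 'a \<Rightarrow> bool) \<Rightarrow> nat \<Rightarrow> nat \<Rightarrow> ('a vnode \<Rightarrow> nat) \<Rightarrow> nat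
    \<Rightarrow> ('a hnode \<times> 'a hnode) set \<Rightarrow> ('a hnode \<times> 'a hnode \<Rightarrow> nat) \<Rightarrow> 'a hnode \<Rightarrow> 'a hnode set" where
  "received V E L l cls i M r q =
     {p. proposing V E L l cls i M p \<and> proposal V E L l cls i M r p = (p, q)}"

definition accepted :: "'a set \<Rightarrow> ('a \<Rightarrow> 'a \<Rightarrow> bool) \<Rightarrow> nat \<Rightarrow> nat \<Rightarrow> ('a vnode \<Rightarrow> nat) \<Rightarrow> nat
    \<Rightarrow> ('a hnode \<times> 'a hnode) set \<Rightarrow> ('a hnode \<times> 'a hnode \<Rightarrow> nat) \<Rightarrow> 'a hnode \<Rightarrow> 'a hnode" where
  "accepted V E L l cls i M r q =
     chosen (\<lambda>p. p \<in> received V E L l cls i M r q) (\<lambda>p. r (p, q))"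

datatype 'n msg = Propose 'n | Accept 'n

text \<open>Transmissions (sender real node, receiver real node, message) over real edges in one
  round, when each real node x simulates all copies x_C of its layer-l virtual nodes.\<close>
definition transmissions :: "'a set \<Rightarrow> ('a \<Rightarrow> 'a \<Rightarrow> bool) \<Rightarrow> nat \<Rightarrow> nat \<Rightarrow> ('a vnode \<Rightarrow> nat) \<Rightarrow> nat
    \<Rightarrow> ('a hnode \<times> 'a hnode) set \<Rightarrow> ('a hnode \<times> 'a hnode \<Rightarrow> nat)
    \<Rightarrow> ('a \<times> 'a \<times> 'a hnode msg) set" where
  "transmissions V E L l cls i M r =
     {(psi (fst p), y, Propose p) | p y. proposing V E L l cls i M p \<and> y \<noteq> psi (fst p) \<and>
         (\<exists>q. hedge V E L l cls i (p, q) \<and> psi (fst q) = y)}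
   \<union> {(psi (fst q), psi (fst (accepted V E L l cls i M r q)), Accept q) | q.
         received V E L l cls i M r q \<noteq> {} \<and>
         psi (fst q) \<noteq> psi (fst (accepted V E L l cls i M r q))}"

end

theory Submission
  imports Defs
begin

lemma chosen_prop:
  assumes "finite {e. S e}" "S e0"
  shows "S (chosen S r) \<and> (\<forall>e'. S e' \<longrightarrow> r e' \<le> r (chosen S r))"
proof -
  let ?m = "Max (r ` {e. S e})"
  have "?m \<in> r ` {e. S e}" using assms by (intro Max_in) auto
  then obtain e where e: "S e" "r e = ?m" by auto
  have "\<forall>e'. S e' \<longrightarrow> r e' \<le> r e" using assms e by (auto intro: Max_ge)
  with e have "\<exists>e. S e \<and> (\<forall>e'. S e' \<longrightarrow> r e' \<le> r e)" by blast
  then show ?thesis unfolding chosen_def by (rule someI_ex)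
qed

lemma vn_T1: "T1 j y \<in> vnodes V L \<Longrightarrow> y \<in> V"
  unfolding vnodes_def by auto

lemma h2_uniq: "hnode2 V E L l cls i (v,C) \<Longrightarrow> hnode2 V E L l cls i (v,C') \<Longrightarrow> C = C'"
  unfolding hnode2_def by auto

lemma h2_fst: "hnode2 V E L l cls i p \<Longrightarrow> fst p = T2 l (psi (fst p)) \<and> psi (fst p) \<in> V"
  unfolding hnode2_def by (cases p) auto

lemma h2_eq:
  assumes "hnode2 V E L l cls i p" "hnode2 V E L l cls i p'" "psi (fst p) = psi (fst p')"
  shows "p = p'"
proof -
  obtain v C where p: "p = (v, C)" by (cases p)
  obtain v' C' where p': "p' = (v', C')" by (cases p')
  have "v = v'" using h2_fst[OF assms(1)] h2_fst[OF assms(2)] assms(3) p p' by simp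
  then have "C = C'" using assms(1,2) p p' h2_uniq by blast
  then show ?thesis using p p' \<open>v = v'\<close> by simp
qed

lemma finite_h2:
  assumes "finite V"
  shows "finite {p. hnode2 V E L l cls i p}"
proof -
  have inj: "inj_on fst {p. hnode2 V E L l cls i p}"
    by (rule inj_onI) (metis h2_eq mem_Collect_eq)
  have "fst ` {p. hnode2 V E L l cls i p} \<subseteq> T2 l ` V"
    using h2_fst by blast
  then have "finite (fst ` {p. hnode2 V E L l cls i p})"
    using assms finite_subset by blast
  then show ?thesis using finite_imageD inj by blast
qed

lemma received_acc:
  assumes "finite V" "received V E L l cls i M r q \<noteq> {}"
  shows "accepted V E L l cls i M r q \<in> received V E L l cls i M r q"
proof -
  have "received V E L l cls i M r q \<subseteq> {p. hnode2 V E L l cls i p}"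
    unfolding received_def proposing_def by auto
  then have f: "finite {p. p \<in> received V E L l cls i M r q}"
    using finite_h2[OF assms(1), of E L l cls i] finite_subset by (metis Collect_mem_eq)
  from assms(2) obtain p0 where "p0 \<in> received V E L l cls i M r q" by auto
  from chosen_prop[OF f this] show ?thesis unfolding accepted_def by blast
qed

lemma proposal_prop:
  assumes "finite V" "proposing V E L l cls i M p"
  shows "active_edge V E L l cls i M (proposal V E L l cls i M r p)
         \<and> fst (proposal V E L l cls i M r p) = p"
proof -
  have sub: "{e. active_edge V E L l cls i M e \<and> fst e = p} \<subseteq> (\<lambda>y. (p, (T1 l y, snd p))) ` V"
  proof
    fix e assume "e \<in> {e. active_edge V E L l cls i M e \<and> fst e = p}"
    then have a: "hedge V E L l cls i e" "fst e = p" unfolding active_edge_def by auto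
    obtain v C w C' where e: "e = ((v,C),(w,C'))" by (metis prod.collapse)
    from a e obtain y where "C' = C" "w = T1 l y" "vadj V E L v w"
      unfolding hedge_def by auto
    note yy = this
    then have "T1 l y \<in> vnodes V L" unfolding vadj_def by simp
    then have "y \<in> V" by (rule vn_T1)
    moreover have "e = (p, (T1 l y, snd p))" using a e yy by force
    ultimately show "e \<in> (\<lambda>y. (p, (T1 l y, snd p))) ` V" by blast
  qed
  have f: "finite {e. active_edge V E L l cls i M e \<and> fst e = p}"
    using finite_subset[OF sub] assms(1) by simp
  from assms(2) obtain e0 where "active_edge V E L l cls i M e0 \<and> fst e0 = p"
    unfolding proposing_def by auto
  from chosen_prop[OF f this] show ?thesis unfolding proposal_def by blast
qed

lemma hedge_vadj: "hedge V E L l cls i (p, q) \<Longrightarrow> vadj V E L (fst p) (fst q)"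
proof -
  assume h: "hedge V E L l cls i (p, q)"
  obtain v C where p: "p = (v, C)" by (cases p)
  obtain w C' where q: "q = (w, C')" by (cases q)
  from h show ?thesis unfolding p q hedge_def by simp
qed

lemma mem_P: "((a, b, Propose p) \<in> transmissions V E L l cls i M r) \<longleftrightarrow>
   (proposing V E L l cls i M p \<and> a = psi (fst p) \<and> b \<noteq> a \<and>
    (\<exists>q. hedge V E L l cls i (p, q) \<and> psi (fst q) = b))"
  unfolding transmissions_def by blast

lemma mem_A: "((a, b, Accept q) \<in> transmissions V E L l cls i M r) \<longleftrightarrow>
   (received V E L l cls i M r q \<noteq> {} \<and> a = psi (fst q) \<and>
    b = psi (fst (accepted V E L l cls i M r q)) \<and> a \<noteq> b)"
  unfolding transmissions_def by blast

lemma subsing: "(\<forall>a\<in>A. \<forall>b\<in>A. a = b) \<Longrightarrow> finite A \<and> card A \<le> 1"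
proof (cases "A = {}")
  case False
  assume h: "\<forall>a\<in>A. \<forall>b\<in>A. a = b"
  then obtain a where "a \<in> A" using False by auto
  with h have "A = {a}" by auto
  then show ?thesis by simp
qed simp

lemma acc_uniq:
  assumes "finite V"
    "(x, y, Accept q) \<in> transmissions V E L l cls i M r"
    "(x, y, Accept q') \<in> transmissions V E L l cls i M r"
  shows "q = q'"
proof -
  let ?p = "accepted V E L l cls i M r q" and ?p' = "accepted V E L l cls i M r q'"
  from assms(2)[unfolded mem_A] have r1: "received V E L l cls i M r q \<noteq> {}" "y = psi (fst ?p)"
    by blast+
  from assms(3)[unfolded mem_A] have r2: "received V E L l cls i M r q' \<noteq> {}" "y = psi (fst ?p')"
    by blast+
  from received_acc[OF assms(1) r1(1)] have p1: "proposing V E L l cls i M ?p"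
    "proposal V E L l cls i M r ?p = (?p, q)" unfolding received_def mem_Collect_eq by blast+
  from received_acc[OF assms(1) r2(1)] have p2: "proposing V E L l cls i M ?p'"
    "proposal V E L l cls i M r ?p' = (?p', q')" unfolding received_def mem_Collect_eq by blast+
  have "hnode2 V E L l cls i ?p" "hnode2 V E L l cls i ?p'"
    using p1(1) p2(1) unfolding proposing_def by blast+
  moreover have "psi (fst ?p) = psi (fst ?p')" using r1(2) r2(2) by (rule subst)
  ultimately have pe: "?p = ?p'" by (rule h2_eq)
  have "(?p, q) = (?p', q')" using p1(2) p2(2) pe by metis
  then show ?thesis by blast
qed

lemma prop_uniq:
  assumes "(x, y, Propose p) \<in> transmissions V E L l cls i M r"
    "(x', y', Propose p') \<in> transmissions V E L l cls i M r" "x = x'"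
  shows "p = p'"
proof -
  from assms(1)[unfolded mem_P] have a: "hnode2 V E L l cls i p" "x = psi (fst p)"
    unfolding proposing_def by blast+
  from assms(2)[unfolded mem_P] have b: "hnode2 V E L l cls i p'" "x' = psi (fst p')"
    unfolding proposing_def by blast+
  from h2_eq[OF a(1) b(1)] a(2) b(2) assms(3) show ?thesis by simp
qed

lemma acc_nbr:
  assumes "finite V" "\<And>x y. E x y \<Longrightarrow> E y x" "(x, y, Accept q) \<in> transmissions V E L l cls i M r"
  shows "E x y"
proof -
  let ?p = "accepted V E L l cls i M r q"
  from assms(3)[unfolded mem_A] have r1: "received V E L l cls i M r q \<noteq> {}" "y = psi (fst ?p)" "x = psi (fst q)"
    "x \<noteq> y"
    by blast+
  from received_acc[OF assms(1) r1(1)] have p1: "proposing V E L l cls i M ?p"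
    "proposal V E L l cls i M r ?p = (?p, q)" unfolding received_def mem_Collect_eq by blast+
  from proposal_prop[OF assms(1) p1(1), of r] p1(2) have "hedge V E L l cls i (?p, q)"
    unfolding active_edge_def by simp
  then have "vadj V E L (fst ?p) (fst q)" by (rule hedge_vadj)
  then have "E y x" using r1 unfolding vadj_def by auto
  then show ?thesis using assms(2) by blast
qed

lemma prop_nbr:
  assumes "(x, y, Propose p) \<in> transmissions V E L l cls i M r"
  shows "E x y"
proof -
  from assms obtain q where h: "x = psi (fst p)" "y \<noteq> x" "hedge V E L l cls i (p, q)" "psi (fst q) = y"
    unfolding mem_P by blast
  from h(3) have "vadj V E L (fst p) (fst q)" by (rule hedge_vadj)
  then have "psi (fst p) = psi (fst q) \<or> E (psi (fst p)) (psi (fst q))" unfolding vadj_def by blast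
  then show ?thesis using h by auto
qed

theorem lemma9:
  fixes V :: "'a set" and E :: "'a \<Rightarrow> 'a \<Rightarrow> bool" and L l t i \<Delta> :: nat
    and cls :: "'a vnode \<Rightarrow> nat"
    and M :: "('a hnode \<times> 'a hnode) set" and r :: "'a hnode \<times> 'a hnode \<Rightarrow> nat"
  assumes "finite V"
    and "\<And>x y. E x y \<Longrightarrow> x \<in> V \<and> y \<in> V"
    and "\<And>x y. E x y \<Longrightarrow> E y x"
    and "\<And>x. \<not> E x x"
    and "\<And>x. x \<in> V \<Longrightarrow> card {y. E x y} \<le> \<Delta>"
    and "L < l" and "l \<le> 2 * L"
    and "\<And>u. old V L l u \<Longrightarrow> cls u \<in> {1..t}"
    and "i \<in> {1..t}"
    and "M \<subseteq> Collect (hedge V E L l cls i)"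
    and "\<And>e e'. e \<in> M \<Longrightarrow> e' \<in> M \<Longrightarrow> e \<noteq> e' \<Longrightarrow> fst e \<noteq> fst e' \<and> snd e \<noteq> snd e'"
  shows "(\<forall>x y. finite {m. (x, y, m) \<in> transmissions V E L l cls i M r}
                \<and> card {m. (x, y, m) \<in> transmissions V E L l cls i M r} \<le> 2)
       \<and> (\<forall>x. finite {(y, m). (x, y, m) \<in> transmissions V E L l cls i M r}
                \<and> card {(y, m). (x, y, m) \<in> transmissions V E L l cls i M r} \<le> 2 * \<Delta>)"
proof (intro conjI allI)
  let ?T = "transmissions V E L l cls i M r"
  fix x y
  let ?SP = "{m. (x, y, m) \<in> ?T \<and> (\<exists>p. m = Propose p)}"
  let ?SA = "{m. (x, y, m) \<in> ?T \<and> (\<exists>q. m = Accept q)}"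
  have "\<forall>a\<in>?SP. \<forall>b\<in>?SP. a = b"
  proof (intro ballI)
    fix a b assume a: "a \<in> ?SP" and b: "b \<in> ?SP"
    from a obtain p where pa: "a = Propose p" "(x, y, Propose p) \<in> ?T" by blast
    from b obtain p' where pb: "b = Propose p'" "(x, y, Propose p') \<in> ?T" by blast
    have "p = p'" using prop_uniq[OF pa(2) pb(2)] by simp
    then show "a = b" using pa pb by simp
  qed
  then have sp: "finite ?SP \<and> card ?SP \<le> 1" by (rule subsing)
  have "\<forall>a\<in>?SA. \<forall>b\<in>?SA. a = b"
  proof (intro ballI)
    fix a b assume a: "a \<in> ?SA" and b: "b \<in> ?SA"
    from a obtain p where pa: "a = Accept p" "(x, y, Accept p) \<in> ?T" by blast
    from b obtain p' where pb: "b = Accept p'" "(x, y, Accept p') \<in> ?T" by blast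
    have "p = p'" using acc_uniq[OF assms(1) pa(2) pb(2)] .
    then show "a = b" using pa pb by simp
  qed
  then have sa: "finite ?SA \<and> card ?SA \<le> 1" by (rule subsing)
  have eq: "{m. (x, y, m) \<in> ?T} = ?SP \<union> ?SA"
  proof (rule set_eqI)
    fix m show "m \<in> {m. (x, y, m) \<in> ?T} \<longleftrightarrow> m \<in> ?SP \<union> ?SA" by (cases m) simp_all
  qed
  show "finite {m. (x, y, m) \<in> ?T}" unfolding eq using sp sa by blast
  have "card (?SP \<union> ?SA) \<le> card ?SP + card ?SA" by (rule card_Un_le)
  then show "card {m. (x, y, m) \<in> ?T} \<le> 2" unfolding eq using sp sa by linarith
next
  let ?T = "transmissions V E L l cls i M r"
  fix x
  let ?N = "{y. E x y}"
  have "?N \<subseteq> V" using assms(2) by blast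
  then have fN: "finite ?N" using assms(1) by (rule finite_subset)
  have cN: "card ?N \<le> \<Delta>"
  proof (cases "x \<in> V")
    case True then show ?thesis by (rule assms(5))
  next
    case False then have "?N = {}" using assms(2) by blast
    then show ?thesis by simp
  qed
  let ?SP = "{(y, m). (x, y, m) \<in> ?T \<and> (\<exists>p. m = Propose p)}"
  let ?SA = "{(y, m). (x, y, m) \<in> ?T \<and> (\<exists>q. m = Accept q)}"
  have ip: "inj_on fst ?SP"
  proof (rule inj_onI)
    fix a b assume a: "a \<in> ?SP" and b: "b \<in> ?SP" and f: "fst a = fst b"
    from a obtain y p where pa: "a = (y, Propose p)" "(x, y, Propose p) \<in> ?T" by blast
    from b obtain y' p' where pb: "b = (y', Propose p')" "(x, y', Propose p') \<in> ?T" by blast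
    have "p = p'" using prop_uniq[OF pa(2) pb(2)] by simp
    then show "a = b" using pa pb f by simp
  qed
  have ia: "inj_on fst ?SA"
  proof (rule inj_onI)
    fix a b assume a: "a \<in> ?SA" and b: "b \<in> ?SA" and f: "fst a = fst b"
    from a obtain y p where pa: "a = (y, Accept p)" "(x, y, Accept p) \<in> ?T" by blast
    from b obtain y' p' where pb: "b = (y', Accept p')" "(x, y', Accept p') \<in> ?T" by blast
    have yy: "y' = y" using pa pb f by simp
    have "p = p'" using acc_uniq[OF assms(1) pa(2) pb(2)[unfolded yy]] .
    then show "a = b" using pa pb f by simp
  qed
  have "fst ` ?SP \<subseteq> ?N"
  proof
    fix z assume "z \<in> fst ` ?SP"
    then obtain y p where zz: "z = y" "(x, y, Propose p) \<in> ?T" by auto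
    from zz(2) have "E x y" by (rule prop_nbr)
    then show "z \<in> ?N" using zz(1) by simp
  qed
  then have fi: "finite (fst ` ?SP)" and ci: "card (fst ` ?SP) \<le> card ?N"
    using fN finite_subset card_mono by blast+
  have sp: "finite ?SP \<and> card ?SP \<le> \<Delta>"
    using finite_imageD[OF fi ip] card_image[OF ip] ci cN by simp
  have "fst ` ?SA \<subseteq> ?N"
  proof
    fix z assume "z \<in> fst ` ?SA"
    then obtain y p where zz: "z = y" "(x, y, Accept p) \<in> ?T" by auto
    have "E x y" by (rule acc_nbr[OF assms(1,3) zz(2)])
    then show "z \<in> ?N" using zz(1) by simp
  qed
  then have fi2: "finite (fst ` ?SA)" and ci2: "card (fst ` ?SA) \<le> card ?N"
    using fN finite_subset card_mono by blast+
  have sa: "finite ?SA \<and> card ?SA \<le> \<Delta>"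
    using finite_imageD[OF fi2 ia] card_image[OF ia] ci2 cN by simp
  have eq: "{(y, m). (x, y, m) \<in> ?T} = ?SP \<union> ?SA"
  proof (rule set_eqI)
    fix z show "z \<in> {(y, m). (x, y, m) \<in> ?T} \<longleftrightarrow> z \<in> ?SP \<union> ?SA"
      by (cases z, rename_tac a m, case_tac m) simp_all
  qed
  show "finite {(y, m). (x, y, m) \<in> ?T}" unfolding eq using sp sa by blast
  have "card (?SP \<union> ?SA) \<le> card ?SP + card ?SA" by (rule card_Un_le)
  then show "card {(y, m). (x, y, m) \<in> ?T} \<le> 2 * \<Delta>" unfolding eq using sp sa by linarith
qed

end
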